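(* With $f$ as in the context (and $n\ge 3$), every $g\in G$ satisfies $\langle v_0\rangle g=\langle v_0\rangle$.
   Context: Let $p$ be a prime, $\mathbb{F}=\mathrm{GF}(p)$, and $n\ge 3$. Let $V$ be an $\mathbb{F}$-vector space with basis $v_0,\dots,v_n$, $U=\langle v_1,\dots,v_n\rangle$, $W=\Lambda^2V$. Maps are written on the right. For $g\in\mathrm{End}(V)$, $\widehat g$ denotes the induced linear map of $W$, $(x\wedge y)\widehat g=(xg)\wedge(yg)$. The linear map $f:V\to W$ is given by $v_0f=\sum_{i=1}^n b_i\, v_0\wedge v_i+\sum_{1\le j<k\le n}c_{j,k}\, v_j\wedge v_k$ and $v_if=\sum_{j=1}^n A_{i,j}\, v_0\wedge v_j$ for $1\le i\le n$, where $b\in\mathbb{F}^n$ and $c=(c_{j,k})\in\mathbb{F}^{\binom n2}$ are nonzero, and $A$ is the $n\times n$ companion matrix of the minimal polynomial over $\mathbb{F}$ of a primitive element of $\mathrm{GF}(p^n)$. Let $G=\{g\in \mathrm{GL}(V) : (vg)f=(vf)\widehat{g}\ \text{for all } v\in V\}$. *)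

theory Defs
  imports "HOL-Computational_Algebra.Polynomial" "HOL-Library.Cardinality"
begin

text \<open>V = F^(n+1) with standard basis v_0,...,v_n: a vector is a function
  nat => F vanishing outside {0..n}. Endomorphisms of V are (n+1)x(n+1) matrices
  M :: nat => nat => F (entries outside {0..n} are irrelevant), acting on row vectors on
  the right, so row i of M is the image of v_i. An element of W = Lambda^2 V is represented
  by its coordinate function w, where w a b (a < b <= n) is the coefficient of v_a wedge v_b,
  and w a b = 0 otherwise.\<close>

definition vspace :: "nat \<Rightarrow> (nat \<Rightarrow> 'a::zero) set" where
  "vspace n = {x. \<forall>i>n. x i = 0}"

definition vecmat :: "nat \<Rightarrow> (nat \<Rightarrow> 'a::comm_ring_1) \<Rightarrow> (nat \<Rightarrow> nat \<Rightarrow> 'a) \<Rightarrow> (nat \<Rightarrow> 'a)" where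
  "vecmat n x M = (\<lambda>j. if j \<le> n then (\<Sum>i\<le>n. x i * M i j) else 0)"

definition matmul :: "nat \<Rightarrow> (nat \<Rightarrow> nat \<Rightarrow> 'a::comm_ring_1) \<Rightarrow> (nat \<Rightarrow> nat \<Rightarrow> 'a) \<Rightarrow> (nat \<Rightarrow> nat \<Rightarrow> 'a)" where
  "matmul n M N = (\<lambda>i k. \<Sum>j\<le>n. M i j * N j k)"

definition is_GL :: "nat \<Rightarrow> (nat \<Rightarrow> nat \<Rightarrow> 'a::comm_ring_1) \<Rightarrow> bool" where
  "is_GL n M = (\<exists>N. \<forall>i\<le>n. \<forall>k\<le>n.
      matmul n M N i k = (if i = k then 1 else 0) \<and> matmul n N M i k = (if i = k then 1 else 0))"

definition wedge :: "nat \<Rightarrow> (nat \<Rightarrow> 'a::comm_ring_1) \<Rightarrow> (nat \<Rightarrow> 'a) \<Rightarrow> (nat \<Rightarrow> nat \<Rightarrow> 'a)" where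
  "wedge n x y = (\<lambda>a b. if a < b \<and> b \<le> n then x a * y b - x b * y a else 0)"

definition hat :: "nat \<Rightarrow> (nat \<Rightarrow> nat \<Rightarrow> 'a::comm_ring_1) \<Rightarrow> (nat \<Rightarrow> nat \<Rightarrow> 'a) \<Rightarrow> (nat \<Rightarrow> nat \<Rightarrow> 'a)" where
  "hat n M w = (\<lambda>a b. \<Sum>j\<le>n. \<Sum>k\<in>{j<..n}. w j k * wedge n (M j) (M k) a b)"

text \<open>Images of the basis vectors under f:
  v_0 f = sum_i b_i v_0 wedge v_i + sum_{1<=j<k<=n} c_{j,k} v_j wedge v_k,
  v_i f = sum_j A_{i,j} v_0 wedge v_j  (1 <= i <= n).\<close>
definition f_basis :: "nat \<Rightarrow> (nat \<Rightarrow> 'a::comm_ring_1) \<Rightarrow> (nat \<Rightarrow> nat \<Rightarrow> 'a) \<Rightarrow> (nat \<Rightarrow> nat \<Rightarrow> 'a)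
    \<Rightarrow> nat \<Rightarrow> (nat \<Rightarrow> nat \<Rightarrow> 'a)" where
  "f_basis n b c A i = (\<lambda>j k. if j < k \<and> k \<le> n then
      (if i = 0 then (if j = 0 then b k else c j k) else (if j = 0 then A i k else 0)) else 0)"

definition fmap :: "nat \<Rightarrow> (nat \<Rightarrow> 'a::comm_ring_1) \<Rightarrow> (nat \<Rightarrow> nat \<Rightarrow> 'a) \<Rightarrow> (nat \<Rightarrow> nat \<Rightarrow> 'a)
    \<Rightarrow> (nat \<Rightarrow> 'a) \<Rightarrow> (nat \<Rightarrow> nat \<Rightarrow> 'a)" where
  "fmap n b c A x = (\<lambda>j k. \<Sum>i\<le>n. x i * f_basis n b c A i j k)"

definition stabG :: "nat \<Rightarrow> (nat \<Rightarrow> 'a::comm_ring_1) \<Rightarrow> (nat \<Rightarrow> nat \<Rightarrow> 'a) \<Rightarrow> (nat \<Rightarrow> nat \<Rightarrow> 'a)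
    \<Rightarrow> (nat \<Rightarrow> nat \<Rightarrow> 'a) set" where
  "stabG n b c A = {M. is_GL n M \<and>
      (\<forall>x\<in>vspace n. fmap n b c A (vecmat n x M) = hat n M (fmap n b c A x))}"

text \<open>Companion matrix (indices 1..n) of a monic polynomial q of degree n, for row vectors
  acting on the right: v_i A = v_(i+1) for i < n, v_n A = - sum_j coeff q (j-1) v_j.\<close>
definition companion :: "nat \<Rightarrow> 'a::comm_ring_1 poly \<Rightarrow> (nat \<Rightarrow> nat \<Rightarrow> 'a)" where
  "companion n q = (\<lambda>i j. if 1 \<le> i \<and> i \<le> n \<and> 1 \<le> j \<and> j \<le> n then
      (if i < n then (if j = i + 1 then 1 else 0) else - coeff q (j - 1)) else 0)"

definition is_ring_hom :: "('a::ring_1 \<Rightarrow> 'b::ring_1) \<Rightarrow> bool" where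
  "is_ring_hom \<phi> = (\<phi> 1 = 1 \<and> (\<forall>x y. \<phi> (x + y) = \<phi> x + \<phi> y) \<and> (\<forall>x y. \<phi> (x * y) = \<phi> x * \<phi> y))"

definition primitive_elem :: "'b::field \<Rightarrow> bool" where
  "primitive_elem \<alpha> = (\<forall>y. y \<noteq> 0 \<longrightarrow> (\<exists>k. y = \<alpha> ^ k))"

definition is_minpoly :: "('a::field \<Rightarrow> 'b::field) \<Rightarrow> 'b \<Rightarrow> 'a poly \<Rightarrow> bool" where
  "is_minpoly \<phi> \<alpha> q = (lead_coeff q = 1 \<and> poly (map_poly \<phi> q) \<alpha> = 0 \<and>
      (\<forall>r. r \<noteq> 0 \<and> poly (map_poly \<phi> r) \<alpha> = 0 \<longrightarrow> degree q \<le> degree r))"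

definition line0 :: "'a::zero \<Rightarrow> nat \<Rightarrow> 'a" where
  "line0 t = (\<lambda>i. if i = 0 then t else 0)"

end

theory Submission
  imports Defs
begin

lemma fmap0:
  assumes "x 0 = 0"
  shows "fmap n b c A x j k = (if j = 0 \<and> 0 < k \<and> k \<le> n then (\<Sum>i\<le>n. x i * A i k) else 0)"
  unfolding fmap_def f_basis_def
  using assms by (auto intro!: sum.cong sum.neutral)

lemma hatW:
  "hat n g (\<lambda>j k. if j = 0 \<and> 0 < k \<and> k \<le> n then s k else 0) a b' =
   (\<Sum>k\<in>{0<..n}. s k * wedge n (g 0) (g k) a b')"
proof -
  have "hat n g (\<lambda>j k. if j = 0 \<and> 0 < k \<and> k \<le> n then s k else 0) a b' =
     (\<Sum>j\<le>n. if j = 0 then (\<Sum>k\<in>{0<..n}. s k * wedge n (g 0) (g k) a b') else 0)"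
    unfolding hat_def by (rule sum.cong) (auto intro!: sum.cong)
  also have "\<dots> = (\<Sum>k\<in>{0<..n}. s k * wedge n (g 0) (g k) a b')" by simp
  finally show ?thesis .
qed

lemma key:
  fixes g A :: "nat \<Rightarrow> nat \<Rightarrow> 'a::field"
  assumes H: "\<And>x. x \<in> vspace n \<Longrightarrow> fmap n b c A (vecmat n x g) = hat n g (fmap n b c A x)"
    and u: "u \<in> vspace n" "u 0 = 0" "vecmat n u g 0 = 0"
    and m: "1 \<le> m" "m \<le> n" "g 0 m \<noteq> 0"
  shows "\<exists>\<mu>. \<forall>k. 1 \<le> k \<and> k \<le> n \<longrightarrow> (\<Sum>i\<le>n. vecmat n u g i * A i k) = \<mu> * g 0 k"
proof -
  define s where "s k = (\<Sum>i\<le>n. u i * A i k)" for k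
  define w where "w t = (\<Sum>k\<in>{0<..n}. s k * g k t)" for t
  define z where "z = vecmat n u g"
  have eq: "fmap n b c A z a b' = g 0 a * w b' - g 0 b' * w a" if "a < b'" "b' \<le> n" for a b'
  proof -
    have "fmap n b c A z a b' = hat n g (fmap n b c A u) a b'" using H[OF u(1)] z_def by simp
    also have "fmap n b c A u = (\<lambda>j k. if j = 0 \<and> 0 < k \<and> k \<le> n then s k else 0)"
      by (rule ext)+ (simp add: fmap0[of u, OF u(2)] s_def)
    also have "hat n g \<dots> a b' = (\<Sum>k\<in>{0<..n}. s k * wedge n (g 0) (g k) a b')" by (rule hatW)
    also have "\<dots> = (\<Sum>k\<in>{0<..n}. s k * (g 0 a * g k b' - g 0 b' * g k a))"
      using that by (simp add: wedge_def)
    also have "\<dots> = g 0 a * w b' - g 0 b' * w a"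
      by (simp add: w_def sum_distrib_left sum_subtractf algebra_simps)
    finally show ?thesis .
  qed
  have fz: "fmap n b c A z a b' = (if a = 0 \<and> 0 < b' \<and> b' \<le> n then (\<Sum>i\<le>n. z i * A i b') else 0)" for a b'
    by (rule fmap0) (use u(3) z_def in simp)
  have prp: "g 0 m * w k = g 0 k * w m" if "1 \<le> k" "k \<le> n" for k
  proof (cases k m rule: linorder_cases)
    case less
    with eq[of k m] fz[of k m] that m show ?thesis by simp
  next
    case equal then show ?thesis by simp
  next
    case greater with eq[of m k] fz[of m k] that m show ?thesis by simp
  qed
  define \<mu> where "\<mu> = g 0 0 * w m / g 0 m - w 0"
  show ?thesis
  proof (intro exI allI impI)
    fix k assume k: "1 \<le> k \<and> k \<le> n"
    have "(\<Sum>i\<le>n. z i * A i k) = g 0 0 * w k - g 0 k * w 0" using eq[of 0 k] fz[of 0 k] k by simp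
    also have "w k = g 0 k * w m / g 0 m" using prp[of k] k m(3) by (simp add: field_simps)
    finally show "(\<Sum>i\<le>n. vecmat n u g i * A i k) = \<mu> * g 0 k"
      unfolding \<mu>_def z_def using m(3) by (simp add: field_simps)
  qed
qed


lemma companion_sum:
  assumes "1 \<le> k" "k \<le> n"
  shows "(\<Sum>i\<le>n. z i * companion n q i k) = (if 2 \<le> k then z (k - 1) else 0) - z n * coeff q (k - 1)"
proof -
  have "(\<Sum>i\<le>n. z i * companion n q i k) =
     (\<Sum>i\<le>n. (if i = k - 1 then (if 2 \<le> k then z i else 0) else 0) + (if i = n then - (z i * coeff q (k - 1)) else 0))"
    using assms by (intro sum.cong) (auto simp: companion_def)
  also have "\<dots> = (if 2 \<le> k then z (k - 1) else 0) - z n * coeff q (k - 1)"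
    using assms by (simp add: sum.distrib) linarith
  finally show ?thesis .
qed

lemma vecmat_N:
  assumes "j \<le> n"
  shows "(\<Sum>l\<le>n. vecmat n v g l * N l j) = (\<Sum>i\<le>n. v i * matmul n g N i j)"
proof -
  have "(\<Sum>l\<le>n. vecmat n v g l * N l j) = (\<Sum>l\<le>n. \<Sum>i\<le>n. v i * g i l * N l j)"
    by (intro sum.cong) (auto simp: vecmat_def sum_distrib_right)
  also have "\<dots> = (\<Sum>i\<le>n. \<Sum>l\<le>n. v i * g i l * N l j)" by (rule sum.swap)
  also have "\<dots> = (\<Sum>i\<le>n. v i * matmul n g N i j)"
    by (simp add: matmul_def sum_distrib_left mult.assoc)
  finally show ?thesis .
qed

lemma inj_step:
  fixes g N :: "nat \<Rightarrow> nat \<Rightarrow> 'a::field"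
  assumes GL: "\<And>i k. i \<le> n \<Longrightarrow> k \<le> n \<Longrightarrow> matmul n g N i k = (if i = k then 1 else 0)"
    and v: "v \<in> vspace n"
    and z0: "vecmat n v g 0 = 0"
    and zA: "\<And>k. 1 \<le> k \<Longrightarrow> k \<le> n \<Longrightarrow> (\<Sum>i\<le>n. vecmat n v g i * companion n q i k) = 0"
    and q0: "coeff q 0 \<noteq> 0" and n: "1 \<le> n"
  shows "v j = 0"
proof -
  define z where "z = vecmat n v g"
  have zn: "z n = 0" using zA[of 1] n q0 companion_sum[of 1 n z q] by (simp add: z_def)
  have zk: "z (k - 1) = 0" if "2 \<le> k" "k \<le> n" for k
    using zA[of k] that zn companion_sum[of k n z q] by (simp add: z_def)
  have zall: "z i = 0" if iN: "i \<le> n" for i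
  proof -
    consider "i = 0" | "i = n" | "1 \<le> i" "i < n" using iN by force
    then show ?thesis
    proof cases
      case 1 then show ?thesis using z0 z_def by simp
    next
      case 2 then show ?thesis using zn by simp
    next
      case 3 then show ?thesis using zk[of "i+1"] by simp
    qed
  qed
  show ?thesis
  proof (cases "j \<le> n")
    case False then show ?thesis using v by (simp add: vspace_def)
  next
    case True
    have "(\<Sum>i\<le>n. v i * matmul n g N i j) = (\<Sum>i\<le>n. if i = j then v i else 0)"
      using True GL by (intro sum.cong) auto
    also have "\<dots> = v j" using True by simp
    finally have "v j = (\<Sum>l\<le>n. z l * N l j)" using vecmat_N[OF True, of v g N] z_def by simp
    also have "\<dots> = 0" using zall by simp
    finally show ?thesis .
  qed
qed

lemma vecmat_lin:
  "vecmat n (\<lambda>i. a * x i - b * y i) M = (\<lambda>j. a * vecmat n x M j - b * vecmat n y M j)"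
  unfolding vecmat_def by (rule ext) (simp add: sum_subtractf sum_distrib_left algebra_simps)

definition e3 :: "'a::comm_ring_1 \<Rightarrow> 'a \<Rightarrow> 'a \<Rightarrow> nat \<Rightarrow> 'a" where
  "e3 a1 a2 a3 = (\<lambda>i. (if i = 1 then a1 else 0) + (if i = 2 then a2 else 0) + (if i = 3 then a3 else 0))"

lemma vec_e:
  assumes "3 \<le> n"
  shows "vecmat n (e3 a1 a2 a3) M j = (if j \<le> n then a1 * M 1 j + a2 * M 2 j + a3 * M 3 j else 0)"
  using assms unfolding vecmat_def e3_def by (simp add: sum.distrib distrib_right if_distrib[of "\<lambda>x. x * y" for y] cong: if_cong)

lemma e3_simps: "e3 a b c 0 = 0" "e3 a b c (Suc 0) = a" "e3 a b c 2 = b" "e3 a b c 3 = c"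
  by (simp_all add: e3_def)

lemma e3_vspace: "3 \<le> n \<Longrightarrow> e3 a1 a2 a3 \<in> vspace n"
  unfolding vspace_def e3_def by auto

lemma q0_nz:
  fixes \<phi> :: "'a::field \<Rightarrow> 'b::{field,finite}"
  assumes "is_ring_hom \<phi>" "primitive_elem \<alpha>" "is_minpoly \<phi> \<alpha> q" "CARD('b) > 2"
  shows "coeff q 0 \<noteq> 0"
proof
  assume c0: "coeff q 0 = 0"
  have a0: "\<alpha> \<noteq> 0"
  proof
    assume az: "\<alpha> = 0"
    have "\<not> (UNIV::'b set) \<subseteq> {0,1}"
    proof
      assume "(UNIV::'b set) \<subseteq> {0,1}"
      then have "card (UNIV::'b set) \<le> card {0::'b,1}" by (intro card_mono) auto
      also have "\<dots> \<le> 2" by (simp add: card_insert_if)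
      finally show False using assms(4) by simp
    qed
    then obtain y::'b where y: "y \<noteq> 0" "y \<noteq> 1" by blast
    with assms(2) obtain k where "y = \<alpha>^k" unfolding primitive_elem_def by blast
    with az y show False by (cases k) auto
  qed
  obtain r where q: "q = pCons 0 r" using c0 by (metis pCons_cases coeff_pCons_0)
  have "q \<noteq> 0" using assms(3) unfolding is_minpoly_def by auto
  hence r0: "r \<noteq> 0" using q by auto
  have phi0: "\<phi> 0 = 0" using assms(1) unfolding is_ring_hom_def by (metis add_cancel_right_right add_0)
  have "map_poly \<phi> q = pCons 0 (map_poly \<phi> r)" using q phi0 by (simp add: map_poly_pCons)
  hence "poly (map_poly \<phi> r) \<alpha> = 0" using assms(3) a0 unfolding is_minpoly_def by simp
  moreover have "degree q = Suc (degree r)" using q r0 by simp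
  ultimately show False using assms(3) r0 unfolding is_minpoly_def by fastforce
qed


lemma lin_sum:
  fixes a b C :: "nat \<Rightarrow> 'a::field"
  shows "(\<Sum>i\<le>n. (x * a i - y * b i) * C i) = x * (\<Sum>i\<le>n. a i * C i) - y * (\<Sum>i\<le>n. b i * C i)"
  by (simp add: left_diff_distrib sum_subtractf sum_distrib_left mult.assoc)

lemma twovec:
  fixes g N :: "nat \<Rightarrow> nat \<Rightarrow> 'a::field"
  assumes H: "\<And>x. x \<in> vspace n \<Longrightarrow> fmap n b c (companion n q) (vecmat n x g) = hat n g (fmap n b c (companion n q) x)"
    and GL: "\<And>i k. i \<le> n \<Longrightarrow> k \<le> n \<Longrightarrow> matmul n g N i k = (if i = k then 1 else 0)"
    and q0: "coeff q 0 \<noteq> 0" and n: "1 \<le> n"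
    and m: "1 \<le> m" "m \<le> n" "g 0 m \<noteq> 0"
    and u1: "u1 \<in> vspace n" "u1 0 = 0" "vecmat n u1 g 0 = 0"
    and u2: "u2 \<in> vspace n" "u2 0 = 0" "vecmat n u2 g 0 = 0"
    and t: "u1 t = 0" "u2 t \<noteq> 0" and nz: "u1 s \<noteq> 0"
  shows False
proof -
  obtain \<mu>1 where m1: "\<And>k. 1 \<le> k \<Longrightarrow> k \<le> n \<Longrightarrow> (\<Sum>i\<le>n. vecmat n u1 g i * companion n q i k) = \<mu>1 * g 0 k"
    using key[OF H u1 m] by blast
  obtain \<mu>2 where m2: "\<And>k. 1 \<le> k \<Longrightarrow> k \<le> n \<Longrightarrow> (\<Sum>i\<le>n. vecmat n u2 g i * companion n q i k) = \<mu>2 * g 0 k"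
    using key[OF H u2 m] by blast
  define v where "v = (\<lambda>i. \<mu>2 * u1 i - \<mu>1 * u2 i)"
  have vv: "v \<in> vspace n" using u1(1) u2(1) by (simp add: v_def vspace_def)
  have vg: "vecmat n v g = (\<lambda>j. \<mu>2 * vecmat n u1 g j - \<mu>1 * vecmat n u2 g j)"
    unfolding v_def by (rule vecmat_lin)
  have "v t = 0"
  proof (rule inj_step[OF GL vv _ _ q0 n])
    show "vecmat n v g 0 = 0" using vg u1(3) u2(3) by simp
    fix k assume k: "1 \<le> k" "k \<le> n"
    have "(\<Sum>i\<le>n. vecmat n v g i * companion n q i k) =
      \<mu>2 * (\<Sum>i\<le>n. vecmat n u1 g i * companion n q i k) - \<mu>1 * (\<Sum>i\<le>n. vecmat n u2 g i * companion n q i k)"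
      unfolding vg by (rule lin_sum)
    also have "\<dots> = 0" using m1[OF k] m2[OF k] by simp
    finally show "(\<Sum>i\<le>n. vecmat n v g i * companion n q i k) = 0" .
  qed
  hence mu1: "\<mu>1 = 0" using t by (simp add: v_def)
  have "u1 s = 0"
  proof (rule inj_step[OF GL u1(1) u1(3) _ q0 n])
    fix k assume "1 \<le> k" "k \<le> n"
    then show "(\<Sum>i\<le>n. vecmat n u1 g i * companion n q i k) = 0" using m1 mu1 by simp
  qed
  with nz show False by simp
qed

theorem lemma3p2:
  fixes p n :: nat
    and b :: "nat \<Rightarrow> 'a::{field,finite}"
    and c :: "nat \<Rightarrow> nat \<Rightarrow> 'a"
    and q :: "'a poly"
    and \<phi> :: "'a \<Rightarrow> 'b::{field,finite}"
    and \<alpha> :: 'b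
    and g :: "nat \<Rightarrow> nat \<Rightarrow> 'a"
  assumes "prime p" and "CARD('a) = p"
    and "n \<ge> 3"
    and "\<exists>i\<in>{1..n}. b i \<noteq> 0"
    and "\<exists>j k. 1 \<le> j \<and> j < k \<and> k \<le> n \<and> c j k \<noteq> 0"
    and "CARD('b) = p ^ n"
    and "is_ring_hom \<phi>"
    and "primitive_elem \<alpha>"
    and "is_minpoly \<phi> \<alpha> q"
    and "g \<in> stabG n b c (companion n q)"
  shows "{vecmat n x g | x. x \<in> range line0} = range line0"
proof -
  have n3: "3 \<le> n" using assms(3) .
  have p2: "2 \<le> p" using assms(1) by (simp add: prime_ge_2_nat)
  have "(2::nat) ^ 3 \<le> 2 ^ n" using n3 by (intro power_increasing) auto
  also have "(2::nat) ^ n \<le> p ^ n" using p2 by (intro power_mono) auto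
  finally have card: "CARD('b) > 2" using assms(6) by simp
  have q0: "coeff q 0 \<noteq> 0" using q0_nz[OF assms(7) assms(8) assms(9) card] .
  from assms(10) obtain N where
    GL: "\<And>i k. i \<le> n \<Longrightarrow> k \<le> n \<Longrightarrow> matmul n g N i k = (if i = k then 1 else 0)" and
    H: "\<And>x. x \<in> vspace n \<Longrightarrow> fmap n b c (companion n q) (vecmat n x g) = hat n g (fmap n b c (companion n q) x)"
    unfolding stabG_def is_GL_def by blast
  have n1: "1 \<le> n" using n3 by simp
  have ev: "e3 a1 a2 a3 \<in> vspace n" "e3 a1 a2 a3 0 = 0" for a1 a2 a3 :: 'a
    using e3_vspace[OF n3] by (auto simp: e3_def)
  have el: "vecmat n (e3 a1 a2 a3) g 0 = a1 * g 1 0 + a2 * g 2 0 + a3 * g 3 0" for a1 a2 a3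
    unfolding vec_e[OF n3] by simp
  have y0: "g 0 m = 0" if mm: "1 \<le> m" "m \<le> n" for m
  proof (rule ccontr)
    assume gm: "g 0 m \<noteq> 0"
    note tw = twovec[OF H GL q0 n1 mm gm ev(1) ev(2) _ ev(1) ev(2)]
    consider "g 1 0 = 0" "g 2 0 = 0" | "g 1 0 = 0" "g 2 0 \<noteq> 0" | "g 1 0 \<noteq> 0" by blast
    then show False
    proof cases
      case 1
      show False by (rule tw[of 1 0 0 0 1 0 2 1]) (use 1 in \<open>simp_all add: el e3_simps\<close>)
    next
      case 2
      show False by (rule tw[of 1 0 0 0 "g 3 0" "- g 2 0" 3 1]) (use 2 in \<open>simp_all add: el e3_simps\<close>)
    next
      case 3
      show False by (rule tw[of "g 2 0" "- g 1 0" 0 "g 3 0" 0 "- g 1 0" 3 2])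
        (use 3 in \<open>simp_all add: el e3_simps algebra_simps\<close>)
    qed
  qed
  have "(\<Sum>j\<le>n. g 0 j * N j 0) = (\<Sum>j\<le>n. if j = 0 then g 0 0 * N 0 0 else 0)"
    using y0 by (intro sum.cong) auto
  hence "g 0 0 * N 0 0 = 1" using GL[of 0 0] by (simp add: matmul_def)
  hence g00: "g 0 0 \<noteq> 0" by auto
  have vl: "vecmat n (line0 t) g = line0 (t * g 0 0)" for t
  proof
    fix j
    show "vecmat n (line0 t) g j = line0 (t * g 0 0) j"
      using y0[of j] by (auto simp: vecmat_def line0_def if_distrib[of "\<lambda>x. x * y" for y] cong: if_cong)
  qed
  show ?thesis
  proof (intro set_eqI iffI)
    fix v :: "nat \<Rightarrow> 'a" assume "v \<in> {vecmat n x g | x. x \<in> range line0}"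
    then show "v \<in> range line0" using vl by auto
  next
    fix v :: "nat \<Rightarrow> 'a" assume "v \<in> range line0"
    then obtain s :: 'a where v: "v = line0 s" by auto
    have "v = vecmat n (line0 (s / g 0 0)) g" using v vl g00 by simp
    then show "v \<in> {vecmat n x g | x. x \<in> range line0}" by blast
  qed
qed

end
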